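(* Let $\theta,\kappa\in\mathbb{F}_{q^3}^*$ with $N(\theta)\neq N(\kappa)$. For any point $P\in\Pi_\kappa$, the projection of $\Pi_\theta$ from $P$ onto $m_T$, i.e. the set $\{PQ\cap m_T: Q\in\Pi_\theta\}$, equals $\mathcal S_{-\kappa\theta}$.
   Context: Let $q$ be a prime power, $\mathbb{F}_{q^3}^*=\mathbb{F}_{q^3}\setminus\{0\}$, $N(x)=x^{q^2+q+1}$. Points of $\mathrm{PG}(2,q^3)$ have homogeneous coordinates $(x,y,z)$ and lines $[a,b,c]$. Let $m_T$ be the line $[0,0,1]$. For $\theta\in\mathbb{F}_{q^3}^*$ let $\mathcal S_\theta=\{(x\theta,x^q,0):x\in\mathbb{F}_{q^3}^*\}$ and $\Pi_\theta=\{(r\theta^{q+1},r^q,r^{q^2}\theta):r\in\mathbb{F}_{q^3}^*\}$. *)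

theory Defs
  imports "HOL-Computational_Algebra.Primes"
begin

text \<open>Projective plane PG(2,F) over a finite field F of order q^3.
A point is the set of all nonzero scalar multiples of a nonzero vector (its
homogeneous coordinates).\<close>

type_synonym 'a vec3 = "'a \<times> 'a \<times> 'a"

definition smult3 :: "'a::field \<Rightarrow> 'a vec3 \<Rightarrow> 'a vec3" where
  "smult3 c v = (case v of (x,y,z) \<Rightarrow> (c*x, c*y, c*z))"

definition ppt :: "'a::field vec3 \<Rightarrow> 'a vec3 set" where
  "ppt v = {smult3 c v | c. c \<noteq> 0}"

definition PG2 :: "'a::field vec3 set set" where
  "PG2 = {ppt v | v. v \<noteq> (0,0,0)}"

definition on_line :: "'a::field vec3 \<Rightarrow> 'a vec3 set \<Rightarrow> bool" where
  "on_line l P \<longleftrightarrow> (\<forall>(x,y,z)\<in>P. (case l of (a,b,c) \<Rightarrow> a*x + b*y + c*z = 0))"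

definition det3 :: "'a::field vec3 \<Rightarrow> 'a vec3 \<Rightarrow> 'a vec3 \<Rightarrow> 'a" where
  "det3 u v w = (case u of (u1,u2,u3) \<Rightarrow> case v of (v1,v2,v3) \<Rightarrow> case w of (w1,w2,w3) \<Rightarrow>
     u1*(v2*w3 - v3*w2) - u2*(v1*w3 - v3*w1) + u3*(v1*w2 - v2*w1))"

definition collinear3 :: "'a::field vec3 set \<Rightarrow> 'a vec3 set \<Rightarrow> 'a vec3 set \<Rightarrow> bool" where
  "collinear3 P Q R \<longleftrightarrow> (\<exists>u\<in>P. \<exists>v\<in>Q. \<exists>w\<in>R. det3 u v w = 0)"

definition mT :: "'a::field vec3" where "mT = (0,0,1)"

definition Nrm :: "nat \<Rightarrow> 'a::field \<Rightarrow> 'a" where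
  "Nrm q x = x ^ (q^2 + q + 1)"

definition S_set :: "nat \<Rightarrow> 'a::field \<Rightarrow> 'a vec3 set set" where
  "S_set q \<theta> = {ppt (x*\<theta>, x^q, 0) | x. x \<noteq> 0}"

definition Pi_set :: "nat \<Rightarrow> 'a::field \<Rightarrow> 'a vec3 set set" where
  "Pi_set q \<theta> = {ppt (r*\<theta>^(q+1), r^q, r^(q^2)*\<theta>) | r. r \<noteq> 0}"

definition projection :: "'a::field vec3 set \<Rightarrow> 'a vec3 set set \<Rightarrow> 'a vec3 \<Rightarrow> 'a vec3 set set" where
  "projection P A l = {R \<in> PG2. \<exists>Q\<in>A. Q \<noteq> P \<and> on_line l R \<and> collinear3 P Q R}"

end

theory Submission
  imports Defs "HOL-Number_Theory.Residues"
begin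

lemma ff_pow_card:
  fixes x :: "'a :: {field,finite}"
  shows "x ^ card (UNIV :: 'a set) = x"
proof (cases "x = 0")
  case False
  have "x * (\<Prod>y\<in>UNIV-{0}. x * y) = x * x ^ (card (UNIV :: 'a set) - 1) * \<Prod>(UNIV-{0})"
    by (simp add: prod.distrib mult_ac)
  also have "x * x ^ (card (UNIV :: 'a set) - 1) = x ^ Suc (card (UNIV :: 'a set) - 1)"
    by (subst power_Suc) auto
  also have "Suc (card (UNIV :: 'a set) - 1) = card (UNIV :: 'a set)"
    using finite_UNIV_card_ge_0[where ?'a = 'a] by simp
  also have "(\<Prod>y\<in>UNIV-{0}. x * y) = (\<Prod>y\<in>UNIV-{0}. y)"
    by (rule prod.reindex_bij_witness[of _ "\<lambda>y. y / x" "\<lambda>y. x * y"]) (use False in auto)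
  finally show ?thesis
    by simp
qed (use finite_UNIV_card_ge_0[where ?'a = 'a] in auto)

lemma ff_char:
  fixes dummy :: "'a :: {field,finite}"
  assumes "prime p" "k > 0" "card (UNIV :: 'a set) = p ^ k"
  shows "CHAR('a) = p"
proof -
  have pos: "CHAR('a) > 0" by (rule finite_imp_CHAR_pos) simp
  hence pr: "prime CHAR('a)" by (rule prime_CHAR_semidom)
  have "CHAR('a) dvd p ^ k" using CHAR_dvd_CARD[where 'a='a] assms(3) by simp
  hence "CHAR('a) dvd p" using pr prime_dvd_power by blast
  thus ?thesis using pr assms(1) primes_dvd_imp_eq by blast
qed

lemma ff_frob_add:
  fixes x y :: "'a :: {field,finite}"
  assumes "prime p" "k > 0" "card (UNIV :: 'a set) = (p ^ k)^3" "q = p ^ k"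
  shows "(x + y) ^ q = x ^ q + y ^ q"
proof -
  have c: "card (UNIV :: 'a set) = p ^ (k*3)" using assms(3) by (simp add: power_mult)
  have "CHAR('a) = p" using ff_char[OF assms(1) _ c] assms(2) by simp
  thus ?thesis using freshmans_dream'[of q k x y] assms by simp
qed


lemma smult3_simp [simp]: "smult3 c (x,y,z) = (c*x, c*y, c*z)"
  by (simp add: smult3_def)

lemma mem_ppt: "w \<in> ppt v \<longleftrightarrow> (\<exists>c. c \<noteq> 0 \<and> w = smult3 c v)"
  by (auto simp: ppt_def)

lemma self_in_ppt: "(v :: 'a::field vec3) \<in> ppt v"
  unfolding mem_ppt by (rule exI[of _ 1]) (cases v, auto)

lemma smult3_smult: "smult3 e (smult3 c v) = smult3 (e*c) (v::'a::field vec3)"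
  by (cases v) (simp add: mult.assoc)

lemma smult3_one: "smult3 1 (v::'a::field vec3) = v"
  by (cases v) simp

lemma ppt_smult:
  fixes v :: "'a::field vec3"
  assumes "c \<noteq> 0" shows "ppt (smult3 c v) = ppt v"
proof -
  have "w \<in> ppt (smult3 c v) \<longleftrightarrow> w \<in> ppt v" for w
    unfolding mem_ppt smult3_smult
  proof
    assume "\<exists>e. e \<noteq> 0 \<and> w = smult3 (e*c) v"
    then obtain e where "e \<noteq> 0" "w = smult3 (e*c) v" by blast
    thus "\<exists>e. e \<noteq> 0 \<and> w = smult3 e v" using assms by (intro exI[of _ "e*c"]) simp
  next
    assume "\<exists>e. e \<noteq> 0 \<and> w = smult3 e v"
    then obtain e where "e \<noteq> 0" "w = smult3 e v" by blast
    thus "\<exists>e. e \<noteq> 0 \<and> w = smult3 (e*c) v"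
      using assms by (intro exI[of _ "e/c"]) simp
  qed
  thus ?thesis by blast
qed

lemma det3_smult:
  "det3 (smult3 a u) (smult3 b v) (smult3 c w) = a*b*c*det3 u v w"
  by (cases u; cases v; cases w) (simp add: det3_def algebra_simps)

lemma H1: "(A::'a::field) \<noteq> 0 \<Longrightarrow> A * t = B * k \<Longrightarrow> t = k * (B / A)"
  by (simp add: field_simps)

lemma H2: "(a::'a::field) \<noteq> 0 \<Longrightarrow> b \<noteq> 0 \<Longrightarrow> c \<noteq> 0 \<Longrightarrow> d \<noteq> 0 \<Longrightarrow> e \<noteq> 0 \<Longrightarrow> f \<noteq> 0
  \<Longrightarrow> (a*b)/(c*d) * ((e*d)/(a*f)) * ((c*f)/(e*b)) = 1"
  by (simp add: field_simps)

lemma H3: "(D::'a::field) \<noteq> 0 \<Longrightarrow> E \<noteq> 0 \<Longrightarrow> v1 * D = - v2 * K * E \<Longrightarrow>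
  v1 = v2 * E * (inverse D * - K) \<and> v2 = v2 * E * inverse E"
  by (simp add: field_simps)

lemma H4: "(x::'a::field) \<noteq> 0 \<Longrightarrow> y \<noteq> 0 \<Longrightarrow> x * - K * inverse x - y * (- K * inverse y) = 0"
  by (simp add: field_simps)

theorem lemma7p2:
  fixes \<theta> \<kappa> :: "'a::{field,finite}" and q p k :: nat and P :: "'a vec3 set"
  assumes "prime p" and "k > 0" and "q = p ^ k" and "card (UNIV :: 'a set) = q ^ 3"
    and "\<theta> \<noteq> 0" and "\<kappa> \<noteq> 0" and "Nrm q \<theta> \<noteq> Nrm q \<kappa>"
    and "P \<in> Pi_set q \<kappa>"
  shows "projection P (Pi_set q \<theta>) mT = S_set q (-(\<kappa>*\<theta>))"
proof -
  have qpos: "q > 0" using assms(1,3) prime_gt_0_nat by simp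
  have fa: "(x + y) ^ q = x ^ q + y ^ q" for x y :: 'a
    using ff_frob_add[OF assms(1,2) _ assms(3)] assms(3,4) by simp
  have fn: "(- x) ^ q = - (x ^ q)" for x :: 'a
  proof -
    have "x ^ q + (-x) ^ q = 0" using fa[of x "-x"] qpos by (simp add: power_0_left)
    thus ?thesis by (simp add: eq_neg_iff_add_eq_0 add.commute)
  qed
  have fd: "(x - y) ^ q = x ^ q - y ^ q" for x y :: 'a
    using fa[of x "-y"] fn[of y] by simp
  have f2: "x ^ (q^2) = (x ^ q) ^ q" for x :: 'a
    by (simp add: power2_eq_square power_mult)
  have f3: "((x ^ q) ^ q) ^ q = x" for x :: 'a
  proof -
    have "((x ^ q) ^ q) ^ q = x ^ (q^3)" by (simp add: power3_eq_cube power_mult)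
    thus ?thesis using ff_pow_card[of x] assms(4) by simp
  qed
  have Nrm_eq: "Nrm q x = x * x ^ q * (x ^ q) ^ q" for x :: 'a
    by (simp add: Nrm_def power_add f2 mult_ac)
  obtain s where s0: "s \<noteq> 0" and Ps: "P = ppt (s*\<kappa>^(q+1), s^q, s^(q^2)*\<kappa>)"
    using assms(8) unfolding Pi_set_def by blast
  define P0 where "P0 = (s*\<kappa>^(q+1), s^q, s^(q^2)*\<kappa>)"
  define Q0 where "Q0 = (\<lambda>r::'a. (r*\<theta>^(q+1), r^q, r^(q^2)*\<theta>))"
  define L where "L = (\<lambda>r::'a. s^q * (r^(q^2)*\<theta>) - s^(q^2)*\<kappa> * r^q)"
  define D1 where "D1 = (\<lambda>r::'a. s*\<kappa>^(q+1) * (r^(q^2)*\<theta>) - s^(q^2)*\<kappa> * (r*\<theta>^(q+1)))"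
  have det_eq: "det3 P0 (Q0 r) (w1, w2, 0) = w1 * L r - w2 * D1 r" for r w1 w2
    unfolding P0_def Q0_def L_def D1_def det3_def by (simp add: algebra_simps)
  have D1_eq: "D1 r = - (\<kappa>*\<theta>) * (L r) ^ q" for r
  proof -
    have h: "(L r) ^ q = (s^q)^q * r * \<theta>^q - s * \<kappa>^q * (r^q)^q"
      unfolding L_def fd power_mult_distrib f2 f3 by simp
    show ?thesis unfolding D1_def f2 h by (simp add: algebra_simps power_add)
  qed
  have L_nz: "L r \<noteq> 0" if r0: "r \<noteq> 0" for r
  proof
    assume "L r = 0"
    hence e: "(s^q) * ((r^q)^q) * \<theta> = ((s^q)^q) * (r^q) * \<kappa>"
      unfolding L_def f2 by (simp add: algebra_simps)
    define z where "z = ((s^q)^q) * (r^q) / ((s^q) * ((r^q)^q))"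
    have nz: "s^q \<noteq> 0" "(r^q)^q \<noteq> 0" "(s^q)^q \<noteq> 0" "r^q \<noteq> 0" using s0 r0 by auto
    have th: "\<theta> = \<kappa> * z" unfolding z_def using H1[OF _ e] nz by simp
    have zq: "z^q = (s * (r^q)^q) / ((s^q)^q * r)"
      unfolding z_def power_divide power_mult_distrib f3 by simp
    have zqq: "(z^q)^q = (s^q * r) / (s * r^q)"
      unfolding zq power_divide power_mult_distrib f3 by simp
    have "Nrm q z = 1"
      unfolding Nrm_eq unfolding zqq unfolding zq unfolding z_def
      by (rule H2) (use nz s0 r0 in auto)
    hence "Nrm q \<theta> = Nrm q \<kappa>"
      unfolding th Nrm_eq power_mult_distrib by (simp add: mult_ac)
    thus False using assms(7) by simp
  qed
  have L_add: "L (a - b) = L a - L b" for a b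
    unfolding L_def f2 fd by (simp add: algebra_simps)
  have "inj L"
  proof (rule injI)
    fix a b assume "L a = L b"
    hence "L (a - b) = 0" using L_add[of a b] by simp
    thus "a = b" using L_nz[of "a - b"] by auto
  qed
  hence Lsurj: "surj L" by (rule finite_UNIV_inj_surj[OF finite_UNIV])
  have L0: "L 0 = 0" unfolding L_def using qpos by (simp add: power_0_left)
  have P_eq: "P = ppt P0" using Ps P0_def by simp
  show ?thesis
  proof (rule Set.set_eqI, rule iffI)
    fix R assume "R \<in> projection P (Pi_set q \<theta>) mT"
    then obtain Q where RPG: "R \<in> PG2" and Q: "Q \<in> Pi_set q \<theta>" and onl: "on_line mT R"
      and col: "collinear3 P Q R" unfolding projection_def by blast
    obtain r where r0: "r \<noteq> 0" and Qr: "Q = ppt (Q0 r)" using Q unfolding Pi_set_def Q0_def by blast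
    obtain v where v0: "v \<noteq> (0,0,0)" and Rv: "R = ppt v" using RPG unfolding PG2_def by blast
    obtain v1 v2 v3 where vv: "v = (v1,v2,v3)" by (cases v)
    have "v3 = 0" using onl self_in_ppt[of v] unfolding Rv on_line_def mT_def vv by auto
    hence vv: "v = (v1, v2, 0)" using vv by simp
    obtain u v' w where u: "u \<in> P" and v': "v' \<in> Q" and w: "w \<in> R" and d: "det3 u v' w = 0"
      using col unfolding collinear3_def by blast
    obtain c1 c2 c3 where c: "c1 \<noteq> 0" "c2 \<noteq> 0" "c3 \<noteq> 0" and "u = smult3 c1 P0"
      "v' = smult3 c2 (Q0 r)" "w = smult3 c3 v"
      using u v' w unfolding P_eq Qr Rv mem_ppt by blast
    hence "det3 P0 (Q0 r) v = 0" using d by (simp add: det3_smult)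
    hence e0: "v1 * L r + (\<kappa>*\<theta>) * (v2 * (L r) ^ q) = 0" unfolding vv det_eq D1_eq by (simp add: algebra_simps)
    have e: "v1 * L r = - v2 * (\<kappa>*\<theta>) * (L r) ^ q" using e0 by (simp add: eq_neg_iff_add_eq_0 mult_ac)
    have Lr: "L r \<noteq> 0" using L_nz r0 by simp
    have v2: "v2 \<noteq> 0"
    proof
      assume "v2 = 0" hence "v1 = 0" using e Lr by simp
      thus False using v0 vv \<open>v2 = 0\<close> by simp
    qed
    define x where "x = inverse (L r)"
    have x0: "x \<noteq> 0" using Lr x_def by simp
    have vs: "v = smult3 (v2 * (L r)^q) (x * (- (\<kappa>*\<theta>)), x^q, 0)"
    proof -
      have "v1 = v2 * (L r)^q * (inverse (L r) * - (\<kappa>*\<theta>)) \<and> v2 = v2 * (L r)^q * inverse ((L r)^q)"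
        by (rule H3[OF Lr _ e]) (use Lr in simp)
      thus ?thesis unfolding vv x_def by (simp add: power_inverse)
    qed
    have "R = ppt (x * (- (\<kappa>*\<theta>)), x^q, 0)" unfolding Rv vs by (rule ppt_smult) (simp add: v2 Lr)
    thus "R \<in> S_set q (- (\<kappa>*\<theta>))" unfolding S_set_def using x0 by blast
  next
    fix R assume "R \<in> S_set q (- (\<kappa>*\<theta>))"
    then obtain x where x0: "x \<noteq> 0" and Rx: "R = ppt (x * (- (\<kappa>*\<theta>)), x^q, 0)"
      unfolding S_set_def by blast
    obtain r where Lr: "L r = inverse x" using Lsurj by (metis surjD)
    have r0: "r \<noteq> 0" using Lr L0 x0 by auto
    define Q where "Q = ppt (Q0 r)"
    have QPi: "Q \<in> Pi_set q \<theta>" unfolding Q_def Q0_def Pi_set_def using r0 by blast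
    have QP: "Q \<noteq> P"
    proof
      assume "Q = P"
      hence "Q0 r \<in> ppt P0" using self_in_ppt[of "Q0 r"] P_eq Q_def by simp
      then obtain c where "Q0 r = smult3 c P0" unfolding mem_ppt by blast
      hence "L r = 0" unfolding Q0_def P0_def L_def by (simp add: algebra_simps)
      thus False using L_nz r0 by simp
    qed
    have RPG: "R \<in> PG2" unfolding PG2_def Rx using x0 by fastforce
    have onl: "on_line mT R" unfolding on_line_def mT_def Rx by (auto simp: mem_ppt)
    have "det3 P0 (Q0 r) (x * (- (\<kappa>*\<theta>)), x^q, 0) = 0"
      unfolding det_eq D1_eq Lr power_inverse using H4[of x "x^q" "\<kappa>*\<theta>"] x0 by (simp add: mult.assoc)
    hence col: "collinear3 P Q R" unfolding collinear3_def P_eq Q_def Rx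
      using self_in_ppt by blast
    show "R \<in> projection P (Pi_set q \<theta>) mT"
      unfolding projection_def using RPG QPi QP onl col by blast
  qed
qed

end
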